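(* Let $G=(V,E)$ be an undirected graph with $n$ nodes and $m$ edges. Let $H$ be the set of nodes with degree larger than $m^{1/3}$, and $L=V\setminus H$. Orient every edge $\{u,v\}$ from $u$ to $v$ if $\deg(u)\le \deg(v)$ (breaking ties arbitrarily). Let $P$ be the number of directed $2$-paths $u\to v\to w$ with $u\in L$, $v\in H$, $w\in H$ (i.e., the edge $\{u,v\}$ is oriented from $u$ to $v$ and the edge $\{v,w\}$ is oriented from $v$ to $w$). If $P>100\,m^{4/3}\log^2 n$, then $G$ contains at least $P/(100\log^2 n)$ $4$-cycles.
   Context: Graphs are simple, unweighted and undirected; $\deg(v)$ denotes the degree of node $v$ in $G$. A $2$-path is a path $u,v,w$ on three distinct nodes with edges $\{u,v\},\{v,w\}$; $v$ is its center. A $4$-cycle is a cycle on four distinct nodes. $\log$ denotes the logarithm (base 2). *)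

theory Defs
  imports Complex_Main
begin

definition simple_graph :: "'a set \<Rightarrow> ('a \<Rightarrow> 'a \<Rightarrow> bool) \<Rightarrow> bool" where
  "simple_graph V adj \<longleftrightarrow> finite V \<and>
     (\<forall>u v. adj u v \<longrightarrow> u \<in> V \<and> v \<in> V \<and> u \<noteq> v \<and> adj v u)"

definition edges :: "'a set \<Rightarrow> ('a \<Rightarrow> 'a \<Rightarrow> bool) \<Rightarrow> 'a set set" where
  "edges V adj = {{u, v} | u v. u \<in> V \<and> v \<in> V \<and> adj u v}"

definition num_edges :: "'a set \<Rightarrow> ('a \<Rightarrow> 'a \<Rightarrow> bool) \<Rightarrow> nat" where
  "num_edges V adj = card (edges V adj)"

definition deg :: "'a set \<Rightarrow> ('a \<Rightarrow> 'a \<Rightarrow> bool) \<Rightarrow> 'a \<Rightarrow> nat" where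
  "deg V adj v = card {u \<in> V. adj v u}"

definition degree_orientation ::
  "'a set \<Rightarrow> ('a \<Rightarrow> 'a \<Rightarrow> bool) \<Rightarrow> ('a \<Rightarrow> 'a \<Rightarrow> bool) \<Rightarrow> bool" where
  "degree_orientation V adj ori \<longleftrightarrow>
     (\<forall>u v. ori u v \<longrightarrow> adj u v \<and> deg V adj u \<le> deg V adj v) \<and>
     (\<forall>u v. adj u v \<longrightarrow> (ori u v \<longleftrightarrow> \<not> ori v u))"

definition high_nodes :: "'a set \<Rightarrow> ('a \<Rightarrow> 'a \<Rightarrow> bool) \<Rightarrow> 'a set" where
  "high_nodes V adj = {v \<in> V. real (deg V adj v) > real (num_edges V adj) powr (1/3)}"

definition low_nodes :: "'a set \<Rightarrow> ('a \<Rightarrow> 'a \<Rightarrow> bool) \<Rightarrow> 'a set" where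
  "low_nodes V adj = V - high_nodes V adj"

definition LHH_paths ::
  "'a set \<Rightarrow> ('a \<Rightarrow> 'a \<Rightarrow> bool) \<Rightarrow> ('a \<Rightarrow> 'a \<Rightarrow> bool) \<Rightarrow> nat" where
  "LHH_paths V adj ori = card {(u, v, w). u \<in> low_nodes V adj \<and> v \<in> high_nodes V adj \<and>
      w \<in> high_nodes V adj \<and> u \<noteq> v \<and> v \<noteq> w \<and> u \<noteq> w \<and> ori u v \<and> ori v w}"

text \<open>4-cycles, counted as subgraphs (each identified by its set of four edges).\<close>
definition four_cycles :: "'a set \<Rightarrow> ('a \<Rightarrow> 'a \<Rightarrow> bool) \<Rightarrow> 'a set set set" where
  "four_cycles V adj = {{{a, b}, {b, c}, {c, d}, {d, a}} | a b c d.
      a \<in> V \<and> b \<in> V \<and> c \<in> V \<and> d \<in> V \<and> distinct [a, b, c, d] \<and>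
      adj a b \<and> adj b c \<and> adj c d \<and> adj d a}"

end

theory Submission
  imports Defs "HOL-Analysis.Convex"
begin

lemma kst_arith:
  fixes e h X Y q :: real
  assumes e0: "0 \<le> e" and h0: "0 \<le> h" and X0: "0 \<le> X" and Y0: "0 \<le> Y" and q0: "0 \<le> q"
    and c1: "e^2 \<le> h*(X+e)" and c2: "X^2 \<le> h^2*(Y+X)" and c3: "Y \<le> q^4"
  shows "e \<le> h + h * sqrt h + h*q"
proof (rule ccontr)
  assume "\<not> ?thesis"
  hence gt: "e > h + h * sqrt h + h*q" by simp
  show False
  proof (cases "h = 0")
    case True
    with c1 have "e^2 \<le> 0" by simp
    hence "e = 0" using e0 by (simp add: power2_eq_square) (metis mult_eq_0_iff mult_le_0_iff order_antisym_conv e0)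
    with gt True show False by simp
  next
    case False
    hence hp: "h > 0" using h0 by simp
    define s where "s = sqrt h"
    have s0: "s > 0" using hp s_def by simp
    have ss: "s*s = h" using h0 s_def by simp
    have d: "e - h > s*s*s + s*s*q" using gt ss s_def by (simp add: algebra_simps)
    have d0: "s*s*s + s*s*q \<ge> 0" using s0 q0 by simp
    have "(e-h)^2 > (s*s*s + s*s*q)^2"
      using d d0 by (meson power_strict_mono zero_less_numeral)
    moreover have "e*(e-h) \<ge> (e-h)^2" using d d0 h0 by (simp add: power2_eq_square mult_right_mono)
    moreover have "e*(e-h) \<le> h*X" using c1 by (simp add: power2_eq_square algebra_simps)
    ultimately have "h*X > (s*s*s + s*s*q)^2" by linarith
    moreover have "(s*s*s + s*s*q)^2 = h*(s*s*(s+q)^2)" using ss by (simp add: power2_eq_square algebra_simps)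
    ultimately have "X > s*s*(s+q)^2" using hp by (simp add: mult_less_cancel_left_pos)
    moreover have "s*s*(s+q)^2 \<ge> h*(h + q^2)"
    proof -
      have "0 \<le> h * (q * s)" using ss s0 q0 h0 by simp
      thus ?thesis using ss by (simp add: power2_eq_square algebra_simps)
    qed
    ultimately have Xg: "X > h*h + h*q^2" by (simp add: algebra_simps)
    have "X - h*h > h*q^2" using Xg by simp
    have "X*(X - h*h) > (h*h + h*q^2)*(h*q^2)"
    proof -
      have Xp: "X > 0" using Xg hp by (smt (verit) mult_nonneg_nonneg zero_le_power2)
      have "X*(X-h*h) > X*(h*q^2)" using \<open>X - h*h > h*q^2\<close> Xp
        by (rule mult_strict_left_mono)
      moreover have "X*(h*q^2) \<ge> (h*h + h*q^2)*(h*q^2)" using Xg hp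
        by (intro mult_right_mono) auto
      ultimately show ?thesis by linarith
    qed
    moreover have "(h*h + h*q^2)*(h*q^2) \<ge> h^2*q^4" using hp
      by (simp add: power2_eq_square power4_eq_xxxx algebra_simps)
    moreover have "h^2*q^4 \<ge> h^2*Y" using c3 by (simp add: mult_left_mono)
    ultimately show False using c2 by (simp add: power2_eq_square algebra_simps)
  qed
qed

lemma kst:
  fixes S :: "'a set" and r :: "'a \<Rightarrow> 'a \<Rightarrow> bool" and q :: real
  assumes fin: "finite S" and q0: "q \<ge> 0"
  and Y: "(\<Sum>v\<in>S. \<Sum>v'\<in>S. \<Sum>w\<in>S. \<Sum>w'\<in>S.
            if v \<noteq> v' \<and> w \<noteq> w' \<and> r v w \<and> r v w' \<and> r v' w \<and> r v' w' then 1 else 0::real) \<le> q^4"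
  shows "(\<Sum>v\<in>S. \<Sum>w\<in>S. if r v w then 1 else 0::real)
           \<le> card S + card S * sqrt (card S) + card S * q"
proof -
  define h where "h = real (card S)"
  define e where "e = (\<Sum>v\<in>S. \<Sum>w\<in>S. if r v w then 1 else 0::real)"
  define c where "c = (\<lambda>w. (\<Sum>v\<in>S. if r v w then 1 else 0::real))"
  define k where "k = (\<lambda>v v'. (\<Sum>w\<in>S. if r v w \<and> r v' w then 1 else 0::real))"
  define X where "X = (\<Sum>v\<in>S. \<Sum>v'\<in>S. if v \<noteq> v' then k v v' else 0)"
  define Yv where "Yv = (\<Sum>v\<in>S. \<Sum>v'\<in>S. \<Sum>w\<in>S. \<Sum>w'\<in>S.
            if v \<noteq> v' \<and> w \<noteq> w' \<and> r v w \<and> r v w' \<and> r v' w \<and> r v' w' then 1 else 0::real)"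
  have k0: "k v v' \<ge> 0" for v v' unfolding k_def by (intro sum_nonneg) auto
  have e0: "e \<ge> 0" unfolding e_def by (intro sum_nonneg) auto
  have X0: "X \<ge> 0" unfolding X_def using k0 by (intro sum_nonneg) auto
  have Y0: "Yv \<ge> 0" unfolding Yv_def by (intro sum_nonneg) auto
  have f1: "(\<Sum>w\<in>S. c w) = e" unfolding c_def e_def by (rule sum.swap)
  have kk: "(\<Sum>v\<in>S. k v v) = e" unfolding k_def e_def by simp
  have f2: "(\<Sum>w\<in>S. (c w)^2) = X + e"
  proof -
    have "(c w)^2 = (\<Sum>v\<in>S. \<Sum>v'\<in>S. if r v w \<and> r v' w then 1 else 0)" for w
      unfolding c_def power2_eq_square sum_product by (intro sum.cong) auto
    hence "(\<Sum>w\<in>S. (c w)^2) = (\<Sum>w\<in>S. \<Sum>v\<in>S. \<Sum>v'\<in>S. if r v w \<and> r v' w then 1 else 0)"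
      by simp
    also have "\<dots> = (\<Sum>v\<in>S. \<Sum>w\<in>S. \<Sum>v'\<in>S. if r v w \<and> r v' w then 1 else 0)"
      by (rule sum.swap)
    also have "\<dots> = (\<Sum>v\<in>S. \<Sum>v'\<in>S. k v v')"
      unfolding k_def by (intro sum.cong refl sum.swap)
    also have "\<dots> = (\<Sum>v\<in>S. (\<Sum>v'\<in>S. if v \<noteq> v' then k v v' else 0) + k v v)"
    proof (intro sum.cong refl)
      fix v assume "v \<in> S"
      have "(\<Sum>v'\<in>S. k v v') = (\<Sum>v'\<in>S. (if v \<noteq> v' then k v v' else 0) + (if v = v' then k v v' else 0))"
        by (intro sum.cong) auto
      also have "\<dots> = (\<Sum>v'\<in>S. if v \<noteq> v' then k v v' else 0) + k v v"
        using fin \<open>v \<in> S\<close> by (simp add: sum.distrib)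
      finally show "(\<Sum>v'\<in>S. k v v') = (\<Sum>v'\<in>S. if v \<noteq> v' then k v v' else 0) + k v v" .
    qed
    also have "\<dots> = X + e" unfolding X_def using kk by (simp add: sum.distrib)
    finally show ?thesis .
  qed
  have f3: "(\<Sum>v\<in>S. \<Sum>v'\<in>S. (if v \<noteq> v' then k v v' else 0)^2) = Yv + X"
  proof -
    have sq: "(k v v')^2 = (\<Sum>w\<in>S. \<Sum>w'\<in>S. if w \<noteq> w' \<and> r v w \<and> r v w' \<and> r v' w \<and> r v' w' then 1 else 0) + k v v'"
      for v v'
    proof -
      have "(k v v')^2 = (\<Sum>w\<in>S. \<Sum>w'\<in>S. if r v w \<and> r v' w \<and> r v w' \<and> r v' w' then 1 else 0)"
        unfolding k_def power2_eq_square sum_product by (intro sum.cong) auto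
      also have "\<dots> = (\<Sum>w\<in>S. (\<Sum>w'\<in>S. if w \<noteq> w' \<and> r v w \<and> r v w' \<and> r v' w \<and> r v' w' then 1 else 0)
                     + (if r v w \<and> r v' w then 1 else 0))"
      proof (intro sum.cong refl)
        fix w assume "w \<in> S"
        have "(\<Sum>w'\<in>S. if r v w \<and> r v' w \<and> r v w' \<and> r v' w' then 1 else (0::real))
           = (\<Sum>w'\<in>S. (if w \<noteq> w' \<and> r v w \<and> r v w' \<and> r v' w \<and> r v' w' then 1 else 0)
                      + (if w = w' then (if r v w \<and> r v' w then 1 else 0) else 0))"
          by (intro sum.cong) auto
        also have "\<dots> = (\<Sum>w'\<in>S. if w \<noteq> w' \<and> r v w \<and> r v w' \<and> r v' w \<and> r v' w' then 1 else 0)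
                     + (if r v w \<and> r v' w then 1 else 0)"
          using fin \<open>w \<in> S\<close> by (simp add: sum.distrib)
        finally show "(\<Sum>w'\<in>S. if r v w \<and> r v' w \<and> r v w' \<and> r v' w' then 1 else (0::real)) =
          (\<Sum>w'\<in>S. if w \<noteq> w' \<and> r v w \<and> r v w' \<and> r v' w \<and> r v' w' then 1 else 0)
                     + (if r v w \<and> r v' w then 1 else 0)" .
      qed
      also have "\<dots> = (\<Sum>w\<in>S. \<Sum>w'\<in>S. if w \<noteq> w' \<and> r v w \<and> r v w' \<and> r v' w \<and> r v' w' then 1 else 0) + k v v'"
        unfolding k_def by (simp add: sum.distrib)
      finally show ?thesis .
    qed
    have "(\<Sum>v\<in>S. \<Sum>v'\<in>S. (if v \<noteq> v' then k v v' else 0)^2)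
       = (\<Sum>v\<in>S. \<Sum>v'\<in>S. (\<Sum>w\<in>S. \<Sum>w'\<in>S.
            if v \<noteq> v' \<and> w \<noteq> w' \<and> r v w \<and> r v w' \<and> r v' w \<and> r v' w' then 1 else 0)
          + (if v \<noteq> v' then k v v' else 0))"
      by (intro sum.cong refl) (auto simp: sq)
    also have "\<dots> = Yv + X" unfolding Yv_def X_def by (simp add: sum.distrib)
    finally show ?thesis .
  qed
  have cs1: "e^2 \<le> h * (X + e)"
    using sum_squared_le_sum_of_squares[of c S] f1 f2 unfolding h_def by (simp add: mult.commute)
  have cs2: "X^2 \<le> h^2 * (Yv + X)"
  proof -
    define g where "g = (\<lambda>p. if fst p \<noteq> snd p then k (fst p) (snd p) else 0)"
    have "X = (\<Sum>p\<in>S\<times>S. g p)" unfolding X_def g_def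
      by (simp add: sum.cartesian_product case_prod_beta)
    moreover have "Yv + X = (\<Sum>p\<in>S\<times>S. (g p)^2)" unfolding g_def using f3
      by (simp add: sum.cartesian_product case_prod_beta)
    moreover have "real (card (S\<times>S)) = h^2" unfolding h_def by (simp add: card_cartesian_product power2_eq_square)
    ultimately show ?thesis using sum_squared_le_sum_of_squares[of g "S\<times>S"] by (simp add: mult.commute)
  qed
  have "e \<le> h + h * sqrt h + h * q"
    using kst_arith[OF e0 _ X0 Y0 q0 cs1 cs2] Y unfolding Yv_def h_def by simp
  thus ?thesis unfolding e_def h_def .
qed

lemma card_fibers_le:
  assumes "finite A" and "\<And>y. y \<in> f ` A \<Longrightarrow> card {x\<in>A. f x = y} \<le> k"
  shows "card A \<le> k * card (f ` A)"
proof -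
  have "A = (\<Union>y\<in>f ` A. {x\<in>A. f x = y})" by auto
  hence "card A \<le> (\<Sum>y\<in>f ` A. card {x\<in>A. f x = y})"
    using card_UN_le[of "f ` A" "\<lambda>y. {x\<in>A. f x = y}"] assms(1) by simp
  also have "\<dots> \<le> (\<Sum>y\<in>f ` A. k)" using assms(2) by (intro sum_mono) auto
  finally show ?thesis by (simp add: mult.commute)
qed

lemma inj_cycle:
  assumes "distinct [a,b,c,d]" "distinct [a,b,c',d']"
    and "{{a, b}, {b, c}, {c, d}, {d, a}} = {{a, b}, {b, c'}, {c', d'}, {d', a}}"
  shows "c = c' \<and> d = d'"
proof -
  have "{b,c} \<in> {{a, b}, {b, c}, {c, d}, {d, a}}" by simp
  hence "{b,c} \<in> {{a, b}, {b, c'}, {c', d'}, {d', a}}" using assms(3) by simp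
  hence 1: "c = c'" using assms(1,2) by (auto simp: doubleton_eq_iff)
  have "{d,a} \<in> {{a, b}, {b, c}, {c, d}, {d, a}}" by simp
  hence "{d,a} \<in> {{a, b}, {b, c'}, {c', d'}, {d', a}}" using assms(3) by simp
  hence 2: "d = d'" using assms(1,2) by (auto simp: doubleton_eq_iff)
  show ?thesis using 1 2 by simp
qed

lemma four_cycles_finite:
  assumes "finite V" shows "finite (four_cycles V adj)"
proof -
  have "four_cycles V adj \<subseteq> Pow (Pow V)" unfolding four_cycles_def by auto
  thus ?thesis using assms by (meson finite_Pow_iff finite_subset)
qed

lemma sum4_card:
  assumes "finite S"
  shows "(\<Sum>v\<in>S. \<Sum>v'\<in>S. \<Sum>w\<in>S. \<Sum>w'\<in>S. if P v v' w w' then 1 else 0::real)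
       = real (card {(v,v',w,w'). v \<in> S \<and> v' \<in> S \<and> w \<in> S \<and> w' \<in> S \<and> P v v' w w'})"
proof -
  have "(\<Sum>v\<in>S. \<Sum>v'\<in>S. \<Sum>w\<in>S. \<Sum>w'\<in>S. if P v v' w w' then 1 else 0::real)
      = (\<Sum>x\<in>S\<times>S\<times>S\<times>S. if P (fst x) (fst (snd x)) (fst (snd (snd x))) (snd (snd (snd x))) then 1 else 0)"
    by (simp add: sum.cartesian_product case_prod_beta)
  also have "\<dots> = real (card {x\<in>S\<times>S\<times>S\<times>S. P (fst x) (fst (snd x)) (fst (snd (snd x))) (snd (snd (snd x)))})"
    using assms by (subst sum.inter_filter[symmetric]) auto
  also have "{x\<in>S\<times>S\<times>S\<times>S. P (fst x) (fst (snd x)) (fst (snd (snd x))) (snd (snd (snd x)))}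
       = {(v,v',w,w'). v \<in> S \<and> v' \<in> S \<and> w \<in> S \<and> w' \<in> S \<and> P v v' w w'}" by auto
  finally show ?thesis .
qed

lemma edges_finite: "finite V \<Longrightarrow> finite (edges V adj)"
proof -
  assume "finite V"
  moreover have "edges V adj \<subseteq> Pow V" unfolding edges_def by auto
  ultimately show ?thesis by (meson finite_Pow_iff finite_subset)
qed

lemma deg_sum_le:
  assumes G: "simple_graph V adj" and SV: "S \<subseteq> V"
  shows "(\<Sum>v\<in>S. deg V adj v) \<le> 2 * num_edges V adj"
proof -
  have finV: "finite V" using G unfolding simple_graph_def by simp
  define D2 where "D2 = Sigma V (\<lambda>v. {u\<in>V. adj v u})"
  have finD2: "finite D2" unfolding D2_def using finV by auto
  have "(\<Sum>v\<in>S. deg V adj v) \<le> (\<Sum>v\<in>V. deg V adj v)"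
    using SV finV by (intro sum_mono2) auto
  also have "\<dots> = card D2" unfolding D2_def deg_def using finV by simp
  also have "card D2 \<le> 2 * card ((\<lambda>p. {fst p, snd p}) ` D2)"
  proof (rule card_fibers_le[OF finD2])
    fix y assume "y \<in> (\<lambda>p. {fst p, snd p}) ` D2"
    then obtain a b where y: "y = {a,b}" by auto
    have "{x\<in>D2. {fst x, snd x} = y} \<subseteq> {(a,b),(b,a)}" using y by (auto simp: doubleton_eq_iff)
    hence "card {x\<in>D2. {fst x, snd x} = y} \<le> card {(a,b),(b,a)}" by (intro card_mono) auto
    also have "\<dots> \<le> 2" using card_length[of "[(a,b),(b,a)]"] by simp
    finally show "card {x\<in>D2. {fst x, snd x} = y} \<le> 2" .
  qed
  also have "card ((\<lambda>p. {fst p, snd p}) ` D2) \<le> num_edges V adj"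
    unfolding num_edges_def
  proof (rule card_mono[OF edges_finite[OF finV]])
    show "(\<lambda>p. {fst p, snd p}) ` D2 \<subseteq> edges V adj" unfolding D2_def edges_def by fastforce
  qed
  finally show ?thesis by simp
qed

lemma cycles_bound:
  assumes G: "simple_graph V adj" and SV: "S \<subseteq> V" and r: "\<And>v w. r v w \<Longrightarrow> adj v w"
  shows "(\<Sum>v\<in>S. \<Sum>v'\<in>S. \<Sum>w\<in>S. \<Sum>w'\<in>S.
            if v \<noteq> v' \<and> w \<noteq> w' \<and> r v w \<and> r v w' \<and> r v' w \<and> r v' w' then 1 else 0::real)
         \<le> 16 * real (card (four_cycles V adj))"
proof -
  have finV: "finite V" using G unfolding simple_graph_def by simp
  have finS: "finite S" using finV SV finite_subset by auto
  have adj: "adj u v \<Longrightarrow> u \<in> V \<and> v \<in> V \<and> u \<noteq> v \<and> adj v u" for u v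
    using G unfolding simple_graph_def by blast
  define T where "T = {(v,v',w,w'). v \<in> S \<and> v' \<in> S \<and> w \<in> S \<and> w' \<in> S \<and>
      (v \<noteq> v' \<and> w \<noteq> w' \<and> r v w \<and> r v w' \<and> r v' w \<and> r v' w')}"
  have finT: "finite T"
  proof -
    have "T \<subseteq> S \<times> S \<times> S \<times> S" unfolding T_def by auto
    thus ?thesis using finS by (meson finite_SigmaI finite_subset)
  qed
  define f where "f = (\<lambda>(v::'a,v'::'a,w::'a,w'::'a). {{v,w},{w,v'},{v',w'},{w',v}})"
  have Tprop: "distinct [v,w,v',w'] \<and> adj v w \<and> adj w v' \<and> adj v' w' \<and> adj w' v \<and> v \<in> V \<and> v' \<in> V \<and> w \<in> V \<and> w' \<in> V"
    if "(v,v',w,w') \<in> T" for v v' w w'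
  proof -
    have h: "v \<noteq> v'" "w \<noteq> w'" "r v w" "r v w'" "r v' w" "r v' w'" using that unfolding T_def by auto
    have a1: "adj v w" "adj v w'" "adj v' w" "adj v' w'" using h r by auto
    show ?thesis using a1 h(1,2) adj[OF a1(1)] adj[OF a1(2)] adj[OF a1(3)] adj[OF a1(4)] by auto
  qed
  have "card T \<le> 16 * card (f ` T)"
  proof (rule card_fibers_le[OF finT])
    fix y assume "y \<in> f ` T"
    then obtain v0 v0' w0 w0' where t0: "(v0,v0',w0,w0') \<in> T" and y: "y = f (v0,v0',w0,w0')" by auto
    define U where "U = {v0,w0,v0',w0'}"
    define F where "F = {x\<in>T. f x = y}"
    define \<pi> where "\<pi> = (\<lambda>x::'a\<times>'a\<times>'a\<times>'a. (fst x, fst (snd (snd x))))"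
    have "inj_on \<pi> F"
    proof (rule inj_onI)
      fix x1 x2 assume x1: "x1 \<in> F" and x2: "x2 \<in> F" and eq: "\<pi> x1 = \<pi> x2"
      obtain v a1 w b1 where x1e: "x1 = (v,a1,w,b1)" by (cases x1) auto
      obtain a2 b2 where x2e: "x2 = (v,a2,w,b2)" using eq x1e unfolding \<pi>_def by (cases x2) auto
      have "distinct [v,w,a1,b1]" using Tprop[of v a1 w b1] x1 x1e unfolding F_def by auto
      moreover have "distinct [v,w,a2,b2]" using Tprop[of v a2 w b2] x2 x2e unfolding F_def by auto
      moreover have "{{v,w},{w,a1},{a1,b1},{b1,v}} = {{v,w},{w,a2},{a2,b2},{b2,v}}"
        using x1 x2 x1e x2e unfolding F_def f_def by auto
      ultimately have "a1 = a2 \<and> b1 = b2" by (rule inj_cycle)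
      thus "x1 = x2" using x1e x2e by simp
    qed
    hence "card F = card (\<pi> ` F)" by (simp add: card_image)
    also have "\<pi> ` F \<subseteq> U \<times> U"
    proof
      fix p assume "p \<in> \<pi> ` F"
      then obtain x where x: "x \<in> F" and p: "p = \<pi> x" by auto
      obtain v a w b where xe: "x = (v,a,w,b)" by (cases x) auto
      have "f (v,a,w,b) = f (v0,v0',w0,w0')" using x xe y unfolding F_def by auto
      hence "\<Union> (f (v,a,w,b)) = \<Union> (f (v0,v0',w0,w0'))" by simp
      hence "{v,w,a,b} = U" unfolding f_def U_def by auto
      thus "p \<in> U \<times> U" using p xe unfolding \<pi>_def by auto
    qed
    hence "card (\<pi> ` F) \<le> card (U \<times> U)" by (intro card_mono) (auto simp: U_def)
    also have "card (U \<times> U) = card U * card U" by (simp add: card_cartesian_product)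
    also have "card U \<le> 4" unfolding U_def using card_length[of "[v0,w0,v0',w0']"] by simp
    hence "card U * card U \<le> 16" using mult_le_mono[of "card U" 4 "card U" 4] by simp
    finally show "card {x\<in>T. f x = y} \<le> 16" unfolding F_def .
  qed
  also have "card (f ` T) \<le> card (four_cycles V adj)"
  proof (rule card_mono[OF four_cycles_finite[OF finV]])
    show "f ` T \<subseteq> four_cycles V adj"
    proof
      fix c assume "c \<in> f ` T"
      then obtain v v' w w' where t: "(v,v',w,w') \<in> T" and c: "c = f (v,v',w,w')" by auto
      show "c \<in> four_cycles V adj" unfolding four_cycles_def c f_def
        using Tprop[OF t] by blast
    qed
  qed
  finally have "card T \<le> 16 * card (four_cycles V adj)" by simp
  moreover have "(\<Sum>v\<in>S. \<Sum>v'\<in>S. \<Sum>w\<in>S. \<Sum>w'\<in>S.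
            if v \<noteq> v' \<and> w \<noteq> w' \<and> r v w \<and> r v w' \<and> r v' w \<and> r v' w' then 1 else 0::real) = card T"
    unfolding T_def by (rule sum4_card[OF finS])
  ultimately show ?thesis by simp
qed

lemma harm_le_ln: "n \<ge> 1 \<Longrightarrow> (\<Sum>k=1..n. 1 / real k) \<le> 1 + ln (real n)"
proof (induction n rule: nat_induct_at_least)
  case base then show ?case by simp
next
  case (Suc n)
  have n0: "real n > 0" using Suc.hyps by simp
  have "ln (real n / real (Suc n)) \<le> real n / real (Suc n) - 1"
    using n0 by (intro ln_le_minus_one) simp
  moreover have "ln (real n / real (Suc n)) = ln (real n) - ln (real (Suc n))"
    using n0 by (simp add: ln_div)
  moreover have "real n / real (Suc n) - 1 = - (1 / real (Suc n))"
    using n0 by (simp add: field_simps)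
  ultimately have "1 / real (Suc n) \<le> ln (real (Suc n)) - ln (real n)" by linarith
  thus ?case using Suc.IH by simp
qed

lemma final_arith:
  fixes P m L \<mu> q C :: real
  assumes L1: "L \<ge> 1" and mu1: "\<mu> \<ge> 1" and m3: "m = \<mu>^3"
    and Pup: "P \<le> 4*m*L*(1 + sqrt 2 * \<mu> + q)" and Plow: "P > 100 * (m*\<mu>) * L^2"
    and q0: "q \<ge> 0" and q4: "q^4 = 16*C"
  shows "C \<ge> P/(100*L^2)"
proof (rule ccontr)
  assume "\<not> ?thesis"
  hence Cs: "C < P/(100*L^2)" by simp
  have m1: "m \<ge> 1" using m3 mu1 by (simp add: one_le_power)
  have L2: "L^2 \<ge> L" using L1 by (simp add: power2_eq_square)
  have s2: "sqrt 2 \<le> 1.5" by (rule real_le_lsqrt) (auto simp: power2_eq_square)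
  have "sqrt 2 * \<mu> \<le> 1.5 * \<mu>" using s2 mu1 by (intro mult_right_mono) auto
  hence "1 + sqrt 2 * \<mu> \<le> 2.5 * \<mu>" using mu1 by linarith
  hence "4*m*L*(1 + sqrt 2 * \<mu>) \<le> 4*m*L*(2.5*\<mu>)" using m1 L1 by (intro mult_left_mono) auto
  also have "\<dots> = 10 * (m*\<mu>) * L" by simp
  also have "\<dots> \<le> 10 * (m*\<mu>) * L^2" using L2 m1 mu1 by (intro mult_left_mono) auto
  finally have a: "4*m*L*(1 + sqrt 2 * \<mu>) \<le> 10 * (m*\<mu>) * L^2" .
  have "4*m*L*(1 + sqrt 2 * \<mu> + q) = 4*m*L*(1 + sqrt 2 * \<mu>) + 4*m*L*q" by (simp add: algebra_simps)
  hence b: "4*m*L*q \<ge> (9/10) * P" using a Pup Plow by linarith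
  define t where "t = P / (m*L)"
  have mL: "m*L > 0" using m1 L1 by simp
  have Pt: "P = t * (m*L)" unfolding t_def using mL m1 L1 by (simp add: field_simps)
  have qt: "q \<ge> (9/40) * t"
  proof -
    have "(m*L)*((9/40)*t) \<le> (m*L)*q" using b Pt by (simp add: algebra_simps)
    from mult_left_le_imp_le[OF this mL] show ?thesis .
  qed
  have t0: "t > 0" using Plow Pt mL m1 mu1 L1
    by (smt (verit) mult_pos_pos zero_less_power mult_nonpos_nonneg)
  have "((9/40) * t)^4 \<le> q^4" using qt t0 by (intro power_mono) auto
  hence e1: "((9/40) * t)^4 \<le> 16*C" using q4 by simp
  have e2: "((9/40) * t)^4 = (6561/2560000) * t^4" by (simp add: power_mult_distrib power_divide)
  have c: "(6561/2560000) * t^4 \<le> 16*C" using e1 e2 by linarith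
  have "16*C < 16*(P/(100*L^2))" using Cs by simp
  also have "\<dots> = (4/25) * t * m / L" using Pt L1 by (simp add: power2_eq_square field_simps)
  finally have "(6561/2560000) * t^4 < (4/25) * t * m / L" using c by linarith
  hence "(6561/2560000) * t^4 * L < (4/25) * t * m" using L1 by (simp add: field_simps)
  hence d: "t^3 * L < 63 * m" using t0
  proof -
    assume h: "(6561/2560000) * t^4 * L < (4/25) * t * m"
    have "t * ((6561/2560000) * t^3 * L) < t * ((4/25) * m)" using h by (simp add: algebra_simps power_eq_if)
    hence "(6561/2560000) * t^3 * L < (4/25) * m" using t0 by (simp add: mult_less_cancel_left_pos)
    hence "6561 * (t^3 * L) < 409600 * m" by (simp add: field_simps)
    thus ?thesis using m1 by linarith
  qed
  have "t > 100 * \<mu> * L"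
  proof -
    have "t * (m*L) > (100*\<mu>*L) * (m*L)" using Plow Pt by (simp add: power2_eq_square algebra_simps)
    thus ?thesis using mL by (simp add: mult_less_cancel_right_pos)
  qed
  hence "t^3 > (100*\<mu>*L)^3" using mu1 L1 by (intro power_strict_mono) auto
  hence "t^3 > 1000000 * m * L^3" using m3 by (simp add: power_mult_distrib)
  hence f1: "t^3 * L > 1000000 * m * L^3 * L" using L1 by (simp add: mult_strict_right_mono)
  have "L^3 * L \<ge> 1" using L1 by (metis one_le_power power_Suc2)
  hence f2: "1000000 * m * (L^3 * L) \<ge> 1000000 * m" using m1 by simp
  have "1000000 * m * L^3 * L = 1000000 * m * (L^3 * L)" by simp
  thus False using d m1 f1 f2 by linarith
qed

lemma log_small: "n \<le> 1 \<Longrightarrow> log 2 (real n) = 0"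
  by (cases n) (auto simp: log_def)

theorem theorem2:
  fixes V :: "'a set" and adj ori :: "'a \<Rightarrow> 'a \<Rightarrow> bool"
  assumes "simple_graph V adj"
    and "degree_orientation V adj ori"
    and "real (LHH_paths V adj ori) >
           100 * real (num_edges V adj) powr (4/3) * (log 2 (real (card V)))\<^sup>2"
  shows "real (card (four_cycles V adj)) \<ge>
           real (LHH_paths V adj ori) / (100 * (log 2 (real (card V)))\<^sup>2)"
proof -
  note G = assms(1)
  define m where "m = num_edges V adj"
  define n where "n = card V"
  define L where "L = log 2 (real n)"
  define Hs where "Hs = high_nodes V adj"
  define C where "C = card (four_cycles V adj)"
  define P where "P = LHH_paths V adj ori"
  define \<mu> where "\<mu> = real m powr (1/3)"
  have finV: "finite V" using G unfolding simple_graph_def by simp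
  have adj: "adj u v \<Longrightarrow> u \<in> V \<and> v \<in> V \<and> u \<noteq> v \<and> adj v u" for u v
    using G unfolding simple_graph_def by blast
  have orip: "ori u v \<Longrightarrow> adj u v \<and> deg V adj u \<le> deg V adj v" for u v
    using assms(2) unfolding degree_orientation_def by blast
  have HsV: "Hs \<subseteq> V" unfolding Hs_def high_nodes_def by auto
  have finHs: "finite Hs" using HsV finV finite_subset by auto
  have Hs_deg: "v \<in> Hs \<Longrightarrow> real (deg V adj v) > \<mu>" for v
    unfolding Hs_def high_nodes_def \<mu>_def m_def by auto
  have degn: "deg V adj v \<le> n" for v
    unfolding deg_def n_def using finV by (intro card_mono) auto
  have hs: "(\<Sum>v\<in>S. deg V adj v) \<le> 2 * m" if "S \<subseteq> V" for S
    using deg_sum_le[OF G that] unfolding m_def .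
  have hsr: "(\<Sum>v\<in>S. real (deg V adj v)) \<le> 2 * real m" if "S \<subseteq> V" for S
  proof -
    have "real (\<Sum>v\<in>S. deg V adj v) \<le> real (2 * m)" using hs[OF that] by (simp only: of_nat_le_iff)
    thus ?thesis by simp
  qed
  have hyp: "real P > 100 * real m powr (4/3) * L^2" using assms(3) unfolding P_def m_def L_def n_def .
  show ?thesis
  proof (cases "n \<le> 1")
    case True
    hence "L = 0" unfolding L_def by (rule log_small)
    thus ?thesis unfolding L_def n_def by simp
  next
    case False
    hence n2: "n \<ge> 2" by simp
    have L1: "L \<ge> 1" unfolding L_def using n2 by (subst le_log_iff) auto
    have m1: "m \<ge> 1"
    proof (rule ccontr)
      assume "\<not> m \<ge> 1"
      hence m0: "m = 0" by simp
      have "Hs = {}"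
      proof (rule ccontr)
        assume "Hs \<noteq> {}"
        then obtain v where v: "v \<in> Hs" by auto
        have "deg V adj v \<le> 2*m" using hs[of "{v}"] v HsV by auto
        hence "deg V adj v = 0" using m0 by simp
        moreover have "\<mu> = 0" unfolding \<mu>_def using m0 by simp
        ultimately show False using Hs_deg[OF v] by simp
      qed
      hence "{(u, v, w). u \<in> low_nodes V adj \<and> v \<in> high_nodes V adj \<and>
      w \<in> high_nodes V adj \<and> u \<noteq> v \<and> v \<noteq> w \<and> u \<noteq> w \<and> ori u v \<and> ori v w} = {}"
        unfolding Hs_def by auto
      hence "P = 0" unfolding P_def LHH_paths_def by (simp only: card.empty)
      thus False using hyp m0 by simp
    qed
    have mu1: "\<mu> \<ge> 1" unfolding \<mu>_def using m1 by (simp add: ge_one_powr_ge_zero)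
    have mu3: "real m = \<mu>^3"
    proof -
      have "\<mu>^3 = \<mu> powr (real 3)" using mu1 by (simp add: powr_realpow)
      also have "\<dots> = real m" unfolding \<mu>_def using m1 by (simp add: powr_powr)
      finally show ?thesis by simp
    qed
    have m43: "real m powr (4/3) = real m * \<mu>"
    proof -
      have "real m powr (4/3) = real m powr (1 + 1/3)" by simp
      also have "\<dots> = real m powr 1 * real m powr (1/3)" by (rule powr_add)
      finally show ?thesis unfolding \<mu>_def using m1 by simp
    qed
    define q where "q = sqrt (sqrt (16 * real C))"
    have q0: "q \<ge> 0" unfolding q_def by simp
    have q4: "q^4 = 16 * real C"
    proof -
      have "q^4 = (q^2)^2" by simp
      also have "q^2 = sqrt (16 * real C)" unfolding q_def by simp
      finally show ?thesis by simp
    qed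
    define R where "R = {x \<in> Hs \<times> Hs. ori (fst x) (snd x)}"
    have finR: "finite R" unfolding R_def using finHs by auto
    define d where "d = (\<lambda>x::'a\<times>'a. deg V adj (fst x))"
    have P_le: "P \<le> (\<Sum>x\<in>R. d x)"
    proof -
      define T where "T = {(u, v, w). u \<in> low_nodes V adj \<and> v \<in> high_nodes V adj \<and>
        w \<in> high_nodes V adj \<and> u \<noteq> v \<and> v \<noteq> w \<and> u \<noteq> w \<and> ori u v \<and> ori v w}"
      have "T \<subseteq> (\<Union>x\<in>R. (\<lambda>u. (u, fst x, snd x)) ` {u\<in>V. adj (fst x) u})"
      proof
        fix t assume t: "t \<in> T"
        then obtain u v w where te: "t = (u,v,w)" by (cases t) auto
        have h: "v \<in> Hs" "w \<in> Hs" "ori u v" "ori v w" using t te unfolding T_def Hs_def by auto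
        have "(v,w) \<in> R" unfolding R_def using h by simp
        moreover have "u \<in> {u\<in>V. adj v u}" using orip[OF h(3)] adj by auto
        ultimately show "t \<in> (\<Union>x\<in>R. (\<lambda>u. (u, fst x, snd x)) ` {u\<in>V. adj (fst x) u})"
          using te by force
      qed
      hence "card T \<le> card (\<Union>x\<in>R. (\<lambda>u. (u, fst x, snd x)) ` {u\<in>V. adj (fst x) u})"
        using finR finV by (intro card_mono) auto
      also have "\<dots> \<le> (\<Sum>x\<in>R. card ((\<lambda>u. (u, fst x, snd x)) ` {u\<in>V. adj (fst x) u}))"
        using finR by (rule card_UN_le)
      also have "\<dots> \<le> (\<Sum>x\<in>R. d x)"
        unfolding d_def deg_def by (intro sum_mono card_image_le) (use finV in auto)
      finally show ?thesis unfolding P_def LHH_paths_def T_def .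
    qed
    define RD where "RD = (\<lambda>D. {x\<in>R. D \<le> d x})"
    have layer: "(\<Sum>x\<in>R. d x) = (\<Sum>D\<in>{1..n}. card (RD D))"
    proof -
      have "d x = (\<Sum>D\<in>{1..n}. if D \<le> d x then 1 else 0)" for x
      proof -
        have "{D\<in>{1..n}. D \<le> d x} = {1..d x}" using degn[of "fst x"] unfolding d_def by auto
        hence "card {D\<in>{1..n}. D \<le> d x} = d x" by simp
        thus ?thesis by (simp add: sum.inter_filter[symmetric])
      qed
      hence "(\<Sum>x\<in>R. d x) = (\<Sum>x\<in>R. \<Sum>D\<in>{1..n}. if D \<le> d x then 1 else 0)" by simp
      also have "\<dots> = (\<Sum>D\<in>{1..n}. \<Sum>x\<in>R. if D \<le> d x then 1 else 0)" by (rule sum.swap)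
      also have "\<dots> = (\<Sum>D\<in>{1..n}. card (RD D))"
        unfolding RD_def using finR by (simp add: sum.inter_filter[symmetric])
      finally show ?thesis .
    qed
    have level: "real (card (RD D)) \<le> 2 * real m / real D * (1 + sqrt 2 * \<mu> + q)" if D: "D \<in> {1..n}" for D
    proof -
      define S where "S = {v\<in>Hs. D \<le> deg V adj v}"
      define h where "h = real (card S)"
      have SV: "S \<subseteq> V" unfolding S_def using HsV by auto
      have finS: "finite S" using SV finV finite_subset by auto
      have RDe: "RD D = {p\<in>S\<times>S. ori (fst p) (snd p)}"
        unfolding RD_def R_def S_def d_def using orip by fastforce
      have "real (card (RD D)) = (\<Sum>p\<in>S\<times>S. if ori (fst p) (snd p) then 1 else 0::real)"
        unfolding RDe using finS by (subst sum.inter_filter[symmetric]) auto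
      also have "\<dots> = (\<Sum>v\<in>S. \<Sum>w\<in>S. if ori v w then 1 else 0::real)"
        by (simp add: sum.cartesian_product case_prod_beta)
      also have "\<dots> \<le> h + h * sqrt h + h * q"
        unfolding h_def
      proof (rule kst[OF finS q0])
        show "(\<Sum>v\<in>S. \<Sum>v'\<in>S. \<Sum>w\<in>S. \<Sum>w'\<in>S.
            if v \<noteq> v' \<and> w \<noteq> w' \<and> ori v w \<and> ori v w' \<and> ori v' w \<and> ori v' w' then 1 else 0::real) \<le> q^4"
          using cycles_bound[OF G SV, of ori] orip q4 unfolding C_def by auto
      qed
      also have "\<dots> = h * (1 + sqrt h + q)" by (simp add: algebra_simps)
      also have "\<dots> \<le> (2 * real m / real D) * (1 + sqrt 2 * \<mu> + q)"
      proof (rule mult_mono)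
        have "real (card S * D) \<le> real (\<Sum>v\<in>S. deg V adj v)"
        proof -
          have "card S * D = (\<Sum>v\<in>S. D)" by simp
          also have "\<dots> \<le> (\<Sum>v\<in>S. deg V adj v)" unfolding S_def by (intro sum_mono) auto
          finally show ?thesis by (simp only: of_nat_le_iff)
        qed
        also have "\<dots> \<le> 2 * real m" using hsr[OF SV] by simp
        finally have "h * real D \<le> 2 * real m" unfolding h_def by simp
        thus "h \<le> 2 * real m / real D" using D by (simp add: field_simps)
        have "h * \<mu> \<le> (\<Sum>v\<in>S. real (deg V adj v))"
        proof -
          have "h * \<mu> = (\<Sum>v\<in>S. \<mu>)" unfolding h_def by simp
          also have "\<dots> \<le> (\<Sum>v\<in>S. real (deg V adj v))"
            using Hs_deg unfolding S_def by (intro sum_mono) (auto intro: less_imp_le)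
          finally show ?thesis .
        qed
        also have "\<dots> \<le> 2 * real m" using hsr[OF SV] by simp
        finally have "h * \<mu> \<le> 2 * \<mu>^3" using mu3 by simp
        hence "h \<le> 2 * \<mu>^2" using mu1 by (simp add: power3_eq_cube power2_eq_square)
        hence "sqrt h \<le> sqrt (2 * \<mu>^2)" by simp
        also have "\<dots> = sqrt 2 * \<mu>" using mu1 by (simp add: real_sqrt_mult)
        finally show "1 + sqrt h + q \<le> 1 + sqrt 2 * \<mu> + q" by simp
        show "0 \<le> 2 * real m / real D" by simp
        show "0 \<le> 1 + sqrt h + q" unfolding h_def using q0 by simp
      qed
      finally show ?thesis .
    qed
    have "real P \<le> (\<Sum>D\<in>{1..n}. real (card (RD D)))"
      using P_le layer by (simp flip: of_nat_sum)
    also have "\<dots> \<le> (\<Sum>D\<in>{1..n}. 2 * real m * (1 + sqrt 2 * \<mu> + q) * (1 / real D))"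
      using level by (intro sum_mono) (simp add: field_simps)
    also have "\<dots> = 2 * real m * (1 + sqrt 2 * \<mu> + q) * (\<Sum>D\<in>{1..n}. 1 / real D)"
      by (simp add: sum_distrib_left)
    also have "\<dots> \<le> 2 * real m * (1 + sqrt 2 * \<mu> + q) * (2 * L)"
    proof (rule mult_left_mono)
      have "(\<Sum>D\<in>{1..n}. 1 / real D) \<le> 1 + ln (real n)" using n2 by (intro harm_le_ln) simp
      also have "ln (real n) \<le> L"
      proof -
        have l2: "ln 2 \<le> (1::real)" using ln_le_minus_one[of 2] by simp
        have l2p: "ln 2 > (0::real)" by simp
        have ln0: "ln (real n) \<ge> 0" using n2 by simp
        have "ln (real n) * ln 2 \<le> ln (real n)" using l2 ln0 by (simp add: mult_left_le)
        hence "ln (real n) \<le> ln (real n) / ln 2" using l2p by (simp add: field_simps)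
        thus ?thesis unfolding L_def log_def .
      qed
      finally show "(\<Sum>D\<in>{1..n}. 1 / real D) \<le> 2 * L" using L1 by simp
      show "0 \<le> 2 * real m * (1 + sqrt 2 * \<mu> + q)" using mu1 q0 by simp
    qed
    also have "\<dots> = 4 * real m * L * (1 + sqrt 2 * \<mu> + q)" by simp
    finally have Pup: "real P \<le> 4 * real m * L * (1 + sqrt 2 * \<mu> + q)" .
    have Plow: "real P > 100 * (real m * \<mu>) * L^2" using hyp m43 by simp
    have "real C \<ge> real P / (100 * L^2)"
      by (rule final_arith[OF L1 mu1 mu3 Pup Plow q0 q4])
    thus ?thesis unfolding C_def P_def L_def n_def .
  qed
qed

end
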